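(* Let $r,\sigma,s,c,\lambda,a,q,d,\gamma,b>0$ with $a<\lambda$, $b<\gamma$, $1-\lambda r>0$, $1-br>0$, and $\theta=\sqrt{2r/\sigma^2}$. For $w>1$ let $$G(w)=\frac{(1-\lambda r)\big((\ln w-1)w^2+\ln w+1\big)-cr\theta(w^2+1)}{\theta(1-ar)(w-1)^2}+\frac{s}{1-ar}-\frac{q}{1-br}-\frac{w+1}{\theta(w-1)}-\frac{2\big(\theta rd-(1-\gamma r)\ln w\big)w}{\theta(1-br)(w-1)^2}.$$ Assume there exists $\hat w>1$ with $G(\hat w)=0$ and $$0\le(1-br)(\hat w^2-1)+2\big(\theta rd-(1-\gamma r)\ln\hat w\big)\hat w<(1-br)(\hat w-1)^2.$$ Let $\bar x_2=\frac{q}{1-br}+\frac{\hat w+1}{\theta(\hat w-1)}+\frac{2(\theta rd-(1-\gamma r)\ln\hat w)\hat w}{\theta(1-br)(\hat w-1)^2}$, $\bar x_1=\bar x_2-\frac{\ln\hat w}{\theta}$, $$C_{21}=\frac{e^{-\theta\bar x_2}}{2r}\Big[(1-br)\Big(\bar x_2+\frac1\theta\Big)-q\Big],\quad C_{22}=\frac{e^{\theta\bar x_2}}{2r}\Big[(1-br)\Big(\bar x_2-\frac1\theta\Big)-q\Big],$$ $\varphi_2(x)=C_{21}e^{\theta x}+C_{22}e^{-\theta x}+\frac{q-x}{r}$, and $$W_2(x)=\begin{cases}-bx & x\ge\bar x_2\\ \varphi_2(x)&\bar x_1<x<\bar x_2\\ -b\bar x_2+d+\gamma(\bar x_2-x)&x\le\bar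 x_1.\end{cases}$$ Then $$\{x\in\mathbb{R}:W_2(x)>-bx\}=(-\infty,\bar x_2),\qquad\{x\in\mathbb{R}:W_2(x)=-bx\}=[\bar x_2,\infty).$$
   Context: This is the candidate equilibrium payoff of player P2 (the stopper) in the second type of Nash equilibrium of a linear impulse controller–stopper game: state $X_t=x+\sigma W_t+\sum_{\tau_n\le t}\delta_n$, P2 has running payoff $q-x$, gains $d+\gamma|\delta|$ at each impulse of P1, and terminal payoff $-bx$, discounted at rate $r$. *)

theory Defs
  imports Complex_Main
begin

end

theory Submission imports Defs begin

lemma alg1: "(\<theta>::real) > 0 \<Longrightarrow> v > 0 \<Longrightarrow> c*(v+2)/(\<theta>*v) - c/\<theta> + 2*K*w/(\<theta>*v^2) = 2 * (c*v + K*w) / (\<theta> * v^2)"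
  by (simp add: field_simps power2_eq_square)

lemma alg2: "(r::real) > 0 \<Longrightarrow> u > 0 \<Longrightarrow> (P+m)/(2*r)/u + (P-m)/(2*r)*u + (m*t - P)/r = (P*(u-1)^2 + m*(1-u^2+2*u*t))/(2*r*u)"
  by (simp add: field_simps power2_eq_square)

lemma alg3: "(\<theta>::real) > 0 \<Longrightarrow> w > 1 \<Longrightarrow> 2*(c*(w-1) - c*L*w)*U/(\<theta>*(w-1)^2) + 2*(c/\<theta>)*F = 2*c/(\<theta>*(w-1)^2)*(F*(w-1)^2 - (1-w+w*L)*U)"
proof -
  assume a: "\<theta> > 0" "w > 1"
  define v where "v = w - 1"
  have v: "v > 0" "w = v + 1" using a unfolding v_def by auto
  show ?thesis unfolding v_def[symmetric] using a(1) v by (simp add: field_simps power2_eq_square)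
qed

lemma alg4: "- (c::real) * L * w < k * w \<Longrightarrow> 2*(c*v - c*L*w) < 2*(c*v + k*w)"
  by (simp add: algebra_simps)

lemma ln_lb1: "0 < (u::real) \<Longrightarrow> 1 - 1/u \<le> ln u"
  using ln_diff_le[of 1 u] by (simp add: diff_divide_distrib)

lemma ln_lb2: assumes "1 \<le> (u::real)" shows "2*(u-1) \<le> (u+1) * ln u"
proof -
  have "(\<lambda>t. (t+1)*ln t - 2*(t-1)) 1 \<le> (\<lambda>t. (t+1)*ln t - 2*(t-1)) u"
  proof (rule DERIV_nonneg_imp_nondecreasing[OF assms])
    fix t :: real assume t: "1 \<le> t" "t \<le> u"
    have "DERIV (\<lambda>t. (t+1)*ln t - 2*(t-1)) t :> (1 * ln t + (t+1) * (1/t) - 2*1)"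
      using t by (auto intro!: derivative_eq_intros)
    moreover have "0 \<le> 1 * ln t + (t+1) * (1/t) - 2*1"
      using ln_lb1[of t] t by (simp add: field_simps)
    ultimately show "\<exists>y. DERIV (\<lambda>t. (t+1)*ln t - 2*(t-1)) t :> y \<and> 0 \<le> y" by blast
  qed
  then show ?thesis by simp
qed

lemma hmono: assumes "1 < (u::real)" "u \<le> w"
  shows "(1-w+w*ln w)*(u-1)^2 \<le> (1-u+u*ln u)*(w-1)^2"
proof -
  let ?h = "\<lambda>t::real. (1-t+t*ln t)/(t-1)^2"
  have "?h w \<le> ?h u"
  proof (rule DERIV_nonpos_imp_nonincreasing[OF assms(2)])
    fix t :: real assume t: "u \<le> t" "t \<le> w"
    then have t1: "t > 1" using assms by simp
    have "DERIV ?h t :> ((-1 + (1 * ln t + t * (1/t))) * (t-1)^2 - (1-t+t*ln t) * (2*(t-1)))/((t-1)^2)^2"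
      using t1 by (auto intro!: derivative_eq_intros)
    moreover have "((-1 + (1 * ln t + t * (1/t))) * (t-1)^2 - (1-t+t*ln t) * (2*(t-1)))/((t-1)^2)^2 \<le> 0"
    proof (rule divide_nonpos_nonneg)
      have e: "(-1 + (1 * ln t + t * (1/t))) * (t-1)^2 - (1-t+t*ln t) * (2*(t-1))
          = (t-1) * (2*(t-1) - (t+1)*ln t)"
        using t1 by (simp add: field_simps power2_eq_square)
      show "(-1 + (1 * ln t + t * (1/t))) * (t-1)^2 - (1-t+t*ln t) * (2*(t-1)) \<le> 0"
        unfolding e using ln_lb2[of t] t1 by (intro mult_nonneg_nonpos) auto
    qed simp
    ultimately show "\<exists>y. DERIV ?h t :> y \<and> y \<le> 0" by blast
  qed
  then show ?thesis using assms by (simp add: field_simps)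
qed

theorem lemmaA4:
  fixes r \<sigma> s c lam a q d \<gamma> b \<theta> w :: real
    and x1 x2 C21 C22 :: real and G W2 \<phi>2 :: "real \<Rightarrow> real"
  assumes pos: "r > 0" "\<sigma> > 0" "s > 0" "c > 0" "lam > 0" "a > 0" "q > 0" "d > 0" "\<gamma> > 0" "b > 0"
    and "a < lam" "b < \<gamma>" "1 - lam * r > 0" "1 - b * r > 0"
    and theta: "\<theta> = sqrt (2 * r / \<sigma>^2)"
    and G_def: "G = (\<lambda>w. ((1 - lam * r) * ((ln w - 1) * w^2 + ln w + 1) - c * r * \<theta> * (w^2 + 1))
                      / (\<theta> * (1 - a * r) * (w - 1)^2)
               + s / (1 - a * r) - q / (1 - b * r) - (w + 1) / (\<theta> * (w - 1))
               - 2 * (\<theta> * r * d - (1 - \<gamma> * r) * ln w) * w / (\<theta> * (1 - b * r) * (w - 1)^2))"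
    and w: "w > 1" "G w = 0"
    and ineq: "0 \<le> (1 - b * r) * (w^2 - 1) + 2 * (\<theta> * r * d - (1 - \<gamma> * r) * ln w) * w"
              "(1 - b * r) * (w^2 - 1) + 2 * (\<theta> * r * d - (1 - \<gamma> * r) * ln w) * w < (1 - b * r) * (w - 1)^2"
    and x2: "x2 = q / (1 - b * r) + (w + 1) / (\<theta> * (w - 1))
               + 2 * (\<theta> * r * d - (1 - \<gamma> * r) * ln w) * w / (\<theta> * (1 - b * r) * (w - 1)^2)"
    and x1: "x1 = x2 - ln w / \<theta>"
    and C21: "C21 = exp (- \<theta> * x2) / (2 * r) * ((1 - b * r) * (x2 + 1 / \<theta>) - q)"
    and C22: "C22 = exp (\<theta> * x2) / (2 * r) * ((1 - b * r) * (x2 - 1 / \<theta>) - q)"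
    and phi: "\<And>x. \<phi>2 x = C21 * exp (\<theta> * x) + C22 * exp (- \<theta> * x) + (q - x) / r"
    and W2: "\<And>x. W2 x = (if x \<ge> x2 then - b * x
                          else if x1 < x then \<phi>2 x
                          else - b * x2 + d + \<gamma> * (x2 - x))"
  shows "{x. W2 x > - b * x} = {..<x2} \<and> {x. W2 x = - b * x} = {x2..}"
proof -
  have th: "\<theta> > 0" using theta pos by simp
  have br: "1 - b*r > 0" by fact
  define L where "L = ln w"
  have L: "L > 0" using w L_def by simp
  define K where "K = \<theta> * r * d - (1 - \<gamma> * r) * L"
  have K: "K > - (1 - b*r) * L"
  proof -
    have "\<theta>*r*d > 0" using th pos by simp
    moreover have "(\<gamma> - b) * r * L > 0" using pos L \<open>b < \<gamma>\<close> by simp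
    ultimately show ?thesis unfolding K_def by (simp add: algebra_simps)
  qed
  define P where "P = (1 - b*r) * x2 - q"
  define m where "m = (1 - b*r) / \<theta>"
  have w1: "w - 1 > 0" using w by simp
  have Pm: "P - m = 2 * ((1-b*r)*(w-1) + K*w) / (\<theta> * (w-1)^2)"
  proof -
    have x2': "x2 = q / (1 - b * r) + (w + 1) / (\<theta> * (w - 1))
               + 2 * K * w / (\<theta> * (1 - b * r) * (w - 1)^2)"
      unfolding x2 K_def L_def by simp
    have "(1-b*r) * x2 = q + (1-b*r)*(w+1)/(\<theta>*(w-1)) + 2*K*w/(\<theta>*(w-1)^2)"
    proof -
      have a1: "(1-b*r) * (q / (1 - b * r)) = q" using br by simp
      have a2: "(1-b*r) * (2 * K * w / (\<theta> * (1 - b * r) * (w - 1)^2)) = 2*K*w/(\<theta>*(w-1)^2)"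
        using br by simp
      show ?thesis unfolding x2' distrib_left a1 a2 by (simp add: algebra_simps)
    qed
    then have "P - m = (1-b*r)*(w+1)/(\<theta>*(w-1)) - (1-b*r)/\<theta> + 2*K*w/(\<theta>*(w-1)^2)"
      unfolding P_def m_def by simp
    also have "\<dots> = 2 * ((1-b*r)*(w-1) + K*w) / (\<theta> * (w-1)^2)"
      using alg1[OF th w1, of "1-b*r" K w] by (simp add: add.commute)
    finally show ?thesis .
  qed
  have x12: "x1 < x2" unfolding x1 using L th L_def by simp
  have main: "W2 x > - b * x" if xl: "x < x2" for x
  proof (cases "x1 < x")
    case False
    then have "W2 x = - b * x2 + d + \<gamma> * (x2 - x)" using W2 xl by simp
    moreover have "(\<gamma> - b) * (x2 - x) > 0" using xl \<open>b < \<gamma>\<close> by simp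
    ultimately show ?thesis using pos by (simp add: algebra_simps)
  next
    case True
    then have Wx: "W2 x = \<phi>2 x" using W2 xl by simp
    define y where "y = x2 - x"
    have y: "0 < y" "\<theta> * y < L" using xl True th unfolding y_def x1 L_def
      by (auto simp: field_simps)
    define u where "u = exp (\<theta> * y)"
    have u: "1 < u" "u < w" using y th w unfolding u_def L_def
      by (auto simp: mult_pos_pos) (metis exp_less_cancel_iff exp_ln w(1) less_trans zero_less_one)
    have lnu: "ln u = \<theta> * y" unfolding u_def by simp
    have e1: "exp (\<theta> * x) = exp (\<theta> * x2) / u"
      unfolding u_def y_def by (simp add: exp_diff[symmetric] algebra_simps)
    have e2: "exp (- \<theta> * x) = exp (- \<theta> * x2) * u"
      unfolding u_def y_def by (simp add: exp_add[symmetric] algebra_simps)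
    have c1: "C21 * exp (\<theta> * x) = (P + m) / (2*r) / u"
      unfolding e1 C21 P_def m_def using th pos u
      by (simp add: field_simps exp_minus)
    have c2: "C22 * exp (- \<theta> * x) = (P - m) / (2*r) * u"
      unfolding e2 C22 P_def m_def using th pos u
      by (simp add: field_simps exp_minus)
    have xy: "x = x2 - ln u / \<theta>" using lnu th y_def by simp
    have f: "\<phi>2 x + b * x = (P * (u-1)^2 + m * (1 - u^2 + 2*u*ln u)) / (2*r*u)"
    proof -
      have mt: "m * \<theta> = 1 - b*r" unfolding m_def using th by simp
      have h1: "(q - x) / r + b * x = (m * (\<theta> * y) - P) / r"
      proof -
        have "m * (\<theta> * y) - P = q - x + b * r * x"
          unfolding mult.assoc[symmetric] mt P_def y_def by (simp add: algebra_simps)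
        then show ?thesis using pos by (simp add: add_divide_distrib diff_divide_distrib)
      qed
      show ?thesis unfolding phi c1 c2 lnu add.assoc h1 using alg2[of r u P m "\<theta> * y"] u pos
        by simp
    qed
    have num: "P * (u-1)^2 + m * (1 - u^2 + 2*u*ln u)
       = (P - m) * (u-1)^2 + 2 * m * (1 - u + u * ln u)"
      by (simp add: algebra_simps power2_eq_square)
    have h: "(1-w+w*ln w)*(u-1)^2 \<le> (1-u+u*ln u)*(w-1)^2" using hmono u by simp
    have "(P - m) * (u-1)^2 > 2 * ((1-b*r)*(w-1) - (1-b*r)*L*w) * (u-1)^2 / (\<theta> * (w-1)^2)"
    proof -
      have "K*w > - (1-b*r)*L*w" using mult_strict_right_mono[OF K, of w] w(1) by simp
      then have ineqK: "2 * ((1-b*r)*(w-1) - (1-b*r)*L*w) < 2 * ((1-b*r)*(w-1) + K*w)" by (rule alg4)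
      have "2 * ((1-b*r)*(w-1) - (1-b*r)*L*w) * (u-1)^2 < 2 * ((1-b*r)*(w-1) + K*w) * (u-1)^2"
        by (rule mult_strict_right_mono[OF ineqK]) (use u in simp)
      moreover have "\<theta> * (w-1)^2 > 0" using th w1 by simp
      ultimately have "2 * ((1-b*r)*(w-1) - (1-b*r)*L*w) * (u-1)^2 / (\<theta> * (w-1)^2)
         < 2 * ((1-b*r)*(w-1) + K*w) * (u-1)^2 / (\<theta> * (w-1)^2)"
        by (rule divide_strict_right_mono)
      also have "\<dots> = (P - m) * (u-1)^2" unfolding Pm by simp
      finally show ?thesis .
    qed
    moreover have "2 * ((1-b*r)*(w-1) - (1-b*r)*L*w) * (u-1)^2 / (\<theta> * (w-1)^2)
        + 2 * m * (1 - u + u * ln u) \<ge> 0"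
    proof -
      have "2 * ((1-b*r)*(w-1) - (1-b*r)*L*w) * (u-1)^2 / (\<theta> * (w-1)^2)
        + 2 * m * (1 - u + u * ln u)
        = 2 * (1-b*r) / (\<theta> * (w-1)^2) * ((1-u+u*ln u)*(w-1)^2 - (1-w+w*L)*(u-1)^2)"
        unfolding m_def using alg3[OF th w(1), of "1-b*r" L "(u-1)^2" "1 - u + u * ln u"]
        by simp
      also have "\<dots> \<ge> 0" using h br th w1 unfolding L_def
        by (intro mult_nonneg_nonneg) auto
      finally show ?thesis by simp
    qed
    ultimately have "P * (u-1)^2 + m * (1 - u^2 + 2*u*ln u) > 0" unfolding num by linarith
    then have "\<phi>2 x + b * x > 0" unfolding f using u pos by simp
    then show ?thesis using Wx by simp
  qed
  have ge: "W2 x = - b * x" if "x \<ge> x2" for x using W2 that by simp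
  have s1: "{x. W2 x > - b * x} = {..<x2}"
  proof (rule set_eqI)
    fix x show "x \<in> {x. W2 x > - b * x} \<longleftrightarrow> x \<in> {..<x2}"
    proof (cases "x < x2")
      case True thus ?thesis using main[OF True] by simp
    next
      case False thus ?thesis using ge[of x] by simp
    qed
  qed
  have s2: "{x. W2 x = - b * x} = {x2..}"
  proof (rule set_eqI)
    fix x show "x \<in> {x. W2 x = - b * x} \<longleftrightarrow> x \<in> {x2..}"
    proof (cases "x < x2")
      case True thus ?thesis using main[OF True] by simp
    next
      case False thus ?thesis using ge[of x] by simp
    qed
  qed
  show ?thesis using s1 s2 by blast
qed

end
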